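(* Let $n=2m+1$ be odd and let $\mathbf{X}=\{X_{rj}:r,j=1,\dots,n\}$ be the switch variables of the standard lightbulb process. Given $\mathbf{X}$, let $B_m$ be uniform on $\{j:X_{mj}=0\}$ and $B_{m+1}$ uniform on $\{j:X_{m+1,j}=1\}$, and let $C_m,C_{m+1}$ be symmetric Bernoulli ($P(C=0)=P(C=1)=1/2$) variables independent of each other, of $\mathbf{X}$ and of $B_m,B_{m+1}$. Define $\mathbf{V}=\{V_{rj}\}$ by $V_{rj}=X_{rj}$ for $r\notin\{m,m+1\}$; $V_{mj}=X_{mj}$ for $j\ne B_m$, $V_{m,B_m}=C_m$; $V_{m+1,j}=X_{m+1,j}$ for $j\ne B_{m+1}$, $V_{m+1,B_{m+1}}=C_{m+1}$. Let $V_j=(\sum_{r=1}^nV_{rj})\bmod 2$ and $V=\sum_{j=1}^nV_j$. Then: the row vectors $(V_{r1},\dots,V_{rn})$, $r=1,\dots,n$, are mutually independent; for $r\in\{m,m+1\}$, $$\mathcal{L}(V_{r1},\dots,V_{rn})=\tfrac12\mathcal{L}(X_{m1},\dots,X_{mn})+\tfrac12\mathcal{L}(X_{m+1,1},\dots,X_{m+1,n});$$ $P(V_j=1)=1/2$ for all $j$; $EV=n/2$; and $\mathrm{Var}(V)=\sigma_V^2:=\frac n4(1-\overline{\lambda}_{n,2,\mathbf{n}})+\frac{n^2}{4}\overline{\lambda}_{n,2,\mathbf{n}}$.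
   Context: Standard lightbulb process: $n$ bulbs, all initially off, $n$ stages; at stage $r=1,\dots,n$ a uniformly random subset of exactly $r$ bulbs is toggled, independently across stages; $X_{rj}\in\{0,1\}$ is $1$ iff bulb $j$ is toggled at stage $r$. With $(n)_t=n(n-1)\cdots(n-t+1)$, define $\lambda_{n,b,s}=\sum_{t=0}^b\binom bt(-2)^t\frac{(s)_t}{(n)_t}$. For $n=2m+1$, $\overline{\lambda}_{n,2,\mathbf{n}}=\Big(\prod_{s\in\{1,\dots,n\}\setminus\{m,m+1\}}\lambda_{n,2,s}\Big)\Big(\tfrac12(\lambda_{n,2,m}+\lambda_{n,2,m+1})\Big)^2$. $\mathcal{L}$ denotes law; a combination $\frac12\mathcal{L}_1+\frac12\mathcal{L}_2$ is the equal mixture. *)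

theory Defs
  imports "HOL-Probability.Probability"
begin

text \<open>Rows of the switch matrix are encoded by the set of toggled bulbs:
  X_rj = 1 iff j is in the row-r set.  Bulbs and stages are indexed by 1..n.\<close>

definition row_pmf :: "nat \<Rightarrow> nat \<Rightarrow> nat set pmf" where
  "row_pmf n r = pmf_of_set {S. S \<subseteq> {1..n} \<and> card S = r}"

definition X_pmf :: "nat \<Rightarrow> (nat \<Rightarrow> nat set) pmf" where
  "X_pmf n = Pi_pmf {1..n} {} (row_pmf n)"

definition V_pmf :: "nat \<Rightarrow> nat \<Rightarrow> (nat \<Rightarrow> nat set) pmf" where
  "V_pmf n m =
    bind_pmf (X_pmf n) (\<lambda>X.
    bind_pmf (pmf_of_set ({1..n} - X m)) (\<lambda>Bm.
    bind_pmf (pmf_of_set (X (m+1))) (\<lambda>Bm1.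
    bind_pmf (bernoulli_pmf (1/2)) (\<lambda>Cm.
    bind_pmf (bernoulli_pmf (1/2)) (\<lambda>Cm1.
    return_pmf (X(m := (X m - {Bm}) \<union> (if Cm then {Bm} else {}),
                  m+1 := (X (m+1) - {Bm1}) \<union> (if Cm1 then {Bm1} else {}))))))))"

definition Vcol :: "nat \<Rightarrow> (nat \<Rightarrow> nat set) \<Rightarrow> nat \<Rightarrow> nat" where
  "Vcol n V j = (\<Sum>r=1..n. (if j \<in> V r then 1 else 0)) mod 2"

definition Vtot :: "nat \<Rightarrow> (nat \<Rightarrow> nat set) \<Rightarrow> nat" where
  "Vtot n V = (\<Sum>j=1..n. Vcol n V j)"

definition ffall :: "nat \<Rightarrow> nat \<Rightarrow> real" where
  "ffall s t = (\<Prod>i<t. real s - real i)"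

definition lam :: "nat \<Rightarrow> nat \<Rightarrow> nat \<Rightarrow> real" where
  "lam n b s = (\<Sum>t=0..b. real (b choose t) * (-2) ^ t * ffall s t / ffall n t)"

definition lam_bar :: "nat \<Rightarrow> nat \<Rightarrow> real" where
  "lam_bar n m = (\<Prod>s\<in>{1..n} - {m, m+1}. lam n 2 s) * ((lam n 2 m + lam n 2 (m+1)) / 2) ^ 2"

end

theory Submission imports Defs begin

abbreviation KK :: "nat \<Rightarrow> nat \<Rightarrow> nat set set" where
  "KK n r \<equiv> {S. S \<subseteq> {1..n} \<and> card S = r}"

lemma KK_fin: "finite (KK n r)"
  by (rule finite_subset[of _ "Pow {1..n}"]) auto

lemma KK_card: "card (KK n r) = n choose r"
  using n_subsets[of "{1..n}" r] by simp

lemma KK_ne: "r \<le> n \<Longrightarrow> KK n r \<noteq> {}"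
  using KK_card[of n r] by (metis card.empty zero_less_binomial_iff not_less zero_less_iff_neq_zero)

lemma set_row: "r \<le> n \<Longrightarrow> set_pmf (row_pmf n r) = KK n r"
  unfolding row_pmf_def using KK_fin KK_ne by (simp add: set_pmf_of_set)

lemma pmf_row: "r \<le> n \<Longrightarrow> pmf (row_pmf n r) S = indicator (KK n r) S / real (n choose r)"
  unfolding row_pmf_def using KK_fin KK_ne KK_card by (simp add: pmf_of_set)

lemma binom_id: "r < n \<Longrightarrow> real (n - r) * real (n choose r) = real (r+1) * real (n choose (r+1))"
proof -
  assume "r < n"
  have "(n - r) * (n choose r) = n * ((n - 1) choose r)" by (rule binomial_absorb_comp)
  also have "\<dots> = (r+1) * (n choose (r+1))"
    using times_binomial_minus1_eq[of "r+1" n] by simp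
  finally show ?thesis by (metis of_nat_mult)
qed

lemma expect_row: "r \<le> n \<Longrightarrow> measure_pmf.expectation (row_pmf n r) f = (\<Sum>S\<in>KK n r. f S) / real (n choose r)"
  unfolding row_pmf_def using KK_fin KK_ne KK_card by (simp add: integral_pmf_of_set)

lemma U1:
  assumes "r < n"
  shows "bind_pmf (row_pmf n r) (\<lambda>y. map_pmf (\<lambda>B. insert B y) (pmf_of_set ({1..n} - y))) = row_pmf n (r+1)"
proof (rule pmf_eqI)
  fix S
  have inner: "pmf (map_pmf (\<lambda>B. insert B y) (pmf_of_set ({1..n} - y))) S
      = (if S \<in> KK n (r+1) \<and> y \<subseteq> S then 1 / real (n - r) else 0)" if y: "y \<in> KK n r" for y
  proof -
    have fy: "finite y" using y finite_subset[of y "{1..n}"] by auto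
    have cU: "card ({1..n} - y) = n - r" using y by (simp add: card_Diff_subset fy)
    hence "card ({1..n} - y) > 0" using assms by simp
    hence ne: "{1..n} - y \<noteq> {}" by (metis card_gt_0_iff)
    have "pmf (map_pmf (\<lambda>B. insert B y) (pmf_of_set ({1..n} - y))) S
        = card (({1..n} - y) \<inter> ((\<lambda>B. insert B y) -` {S})) / card ({1..n} - y)"
      using ne by (simp add: pmf_map measure_pmf_of_set)
    also have "card (({1..n} - y) \<inter> ((\<lambda>B. insert B y) -` {S})) = (if S \<in> KK n (r+1) \<and> y \<subseteq> S then 1 else 0)"
    proof (cases "S \<in> KK n (r+1) \<and> y \<subseteq> S")
      case True
      have "({1..n} - y) \<inter> ((\<lambda>B. insert B y) -` {S}) = S - y"
      proof -
        have key: "insert B y = S" if "B \<in> S" "B \<notin> y" for B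
        proof -
          have fS: "finite S" using True finite_subset[of S "{1..n}"] by auto
          have "card (insert B y) = r + 1" using \<open>B \<notin> y\<close> fy y by simp
          thus "insert B y = S" using True \<open>B \<in> S\<close> fS by (intro card_subset_eq) auto
        qed
        show ?thesis using True key by auto
      qed
      moreover have "card (S - y) = 1" using True fy y by (simp add: card_Diff_subset)
      ultimately show ?thesis using True by simp
    next
      case False
      have "({1..n} - y) \<inter> ((\<lambda>B. insert B y) -` {S}) = {}"
      proof -
        have "False" if "B \<in> {1..n}" "B \<notin> y" "insert B y = S" for B
          using False y fy that by auto
        thus ?thesis by blast
      qed
      thus ?thesis using False by simp
    qed
    finally show ?thesis using cU by simp
  qed
  have "pmf (bind_pmf (row_pmf n r) (\<lambda>y. map_pmf (\<lambda>B. insert B y) (pmf_of_set ({1..n} - y)))) S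
      = (\<Sum>y\<in>KK n r. pmf (map_pmf (\<lambda>B. insert B y) (pmf_of_set ({1..n} - y))) S) / real (n choose r)"
    using assms by (simp add: pmf_bind expect_row)
  also have "(\<Sum>y\<in>KK n r. pmf (map_pmf (\<lambda>B. insert B y) (pmf_of_set ({1..n} - y))) S)
      = (\<Sum>y\<in>KK n r. (if S \<in> KK n (r+1) \<and> y \<subseteq> S then 1 / real (n - r) else 0))"
    by (rule sum.cong[OF refl]) (rule inner)
  also have "\<dots> = (if S \<in> KK n (r+1) then real (r+1) / real (n - r) else 0)"
  proof (cases "S \<in> KK n (r+1)")
    case True
    have "(\<Sum>y\<in>KK n r. (if S \<in> KK n (r+1) \<and> y \<subseteq> S then 1 / real (n - r) else 0))
        = (\<Sum>y\<in>KK n r. if y \<in> {y. y \<subseteq> S} then 1 / real (n - r) else 0)"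
      using True by simp
    also have "\<dots> = (\<Sum>y\<in>KK n r \<inter> {y. y \<subseteq> S}. 1 / real (n - r))"
      by (rule sum.inter_restrict[OF KK_fin, symmetric])
    also have "KK n r \<inter> {y. y \<subseteq> S} = {y. y \<subseteq> S \<and> card y = r}" using True by auto
    also have "card \<dots> = r + 1"
      using True n_subsets[of S r] finite_subset[of S "{1..n}"] by simp
    ultimately show ?thesis using True by simp
  next
    case False
    have "(\<Sum>y\<in>KK n r. (if S \<in> KK n (r+1) \<and> y \<subseteq> S then 1 / real (n - r) else 0)) = 0"
      using False by (intro sum.neutral ballI if_not_P) blast
    thus ?thesis by (simp only: if_not_P[OF False])
  qed
  finally have eq: "pmf (bind_pmf (row_pmf n r) (\<lambda>y. map_pmf (\<lambda>B. insert B y) (pmf_of_set ({1..n} - y)))) S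
      = (if S \<in> KK n (r+1) then real (r+1) / real (n - r) else 0) / real (n choose r)" .
  have p1: "real (n choose (r+1)) > 0" using assms by simp
  have p2: "real (n - r) > 0" using assms by simp
  have id: "real (n - r) * real (n choose r) = real (r + 1) * real (n choose (r + 1))" using binom_id[OF assms] .
  have "(if S \<in> KK n (r+1) then real (r+1) / real (n - r) else 0) / real (n choose r)
      = indicator (KK n (r+1)) S / real (n choose (r+1))"
  proof (cases "S \<in> KK n (r+1)")
    case True
    have "real (r+1) / real (n - r) / real (n choose r) = real (r+1) / (real (n - r) * real (n choose r))"
      by simp
    also have "\<dots> = real (r+1) / (real (r + 1) * real (n choose (r + 1)))" by (simp only: id)
    also have "\<dots> = 1 / real (n choose (r+1))" using p1 by simp
    finally show ?thesis using True by simp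
  next
    case False
    have ind: "indicator (KK n (r+1)) S = (0::real)" using False by (rule indicator_simps(2))
    show ?thesis by (simp only: if_not_P[OF False] ind div_0)
  qed
  thus "pmf (bind_pmf (row_pmf n r) (\<lambda>y. map_pmf (\<lambda>B. insert B y) (pmf_of_set ({1..n} - y)))) S
      = pmf (row_pmf n (r+1)) S"
    using eq assms by (simp add: pmf_row)
qed


lemma cnt:
  assumes U: "finite U" and F: "F \<subseteq> U" and r: "card F \<le> r"
  shows "card {S. S \<subseteq> U \<and> card S = r \<and> F \<subseteq> S} = (card U - card F) choose (r - card F)"
proof -
  have fF: "finite F" using U F finite_subset by auto
  have "bij_betw (\<lambda>S. S - F) {S. S \<subseteq> U \<and> card S = r \<and> F \<subseteq> S} {T. T \<subseteq> U - F \<and> card T = r - card F}"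
  proof (rule bij_betw_byWitness[where f' = "\<lambda>T. T \<union> F"])
    show "\<forall>a\<in>{S. S \<subseteq> U \<and> card S = r \<and> F \<subseteq> S}. a - F \<union> F = a" by auto
    show "\<forall>a'\<in>{T. T \<subseteq> U - F \<and> card T = r - card F}. a' \<union> F - F = a'" by auto
    show "(\<lambda>S. S - F) ` {S. S \<subseteq> U \<and> card S = r \<and> F \<subseteq> S} \<subseteq> {T. T \<subseteq> U - F \<and> card T = r - card F}"
      using fF by (auto simp: card_Diff_subset)
    show "(\<lambda>T. T \<union> F) ` {T. T \<subseteq> U - F \<and> card T = r - card F} \<subseteq> {S. S \<subseteq> U \<and> card S = r \<and> F \<subseteq> S}"
    proof -
      have "card (T \<union> F) = r" if T: "T \<subseteq> U - F" "card T = r - card F" for T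
      proof -
        have fT: "finite T" using T U finite_subset by blast
        have "T \<inter> F = {}" using T by auto
        hence "card (T \<union> F) = card T + card F" using fT fF by (simp add: card_Un_disjoint)
        thus "card (T \<union> F) = r" using T r by simp
      qed
      thus ?thesis using F by auto
    qed
  qed
  hence "card {S. S \<subseteq> U \<and> card S = r \<and> F \<subseteq> S} = card {T. T \<subseteq> U - F \<and> card T = r - card F}"
    by (rule bij_betw_same_card)
  also have "\<dots> = card (U - F) choose (r - card F)" using U by (simp add: n_subsets)
  also have "card (U - F) = card U - card F" using F fF by (simp add: card_Diff_subset)
  finally show ?thesis .
qed

lemma U2:
  assumes "r < n"
  shows "bind_pmf (row_pmf n (r+1)) (\<lambda>z. map_pmf (\<lambda>B. z - {B}) (pmf_of_set z)) = row_pmf n r"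
proof (rule pmf_eqI)
  fix S
  have inner: "pmf (map_pmf (\<lambda>B. z - {B}) (pmf_of_set z)) S
      = (if S \<subseteq> z \<and> card S = r then 1 / real (r + 1) else 0)" if z: "z \<in> KK n (r+1)" for z
  proof -
    have fz: "finite z" using z finite_subset[of z "{1..n}"] by auto
    have cz: "card z = r + 1" using z by simp
    hence ne: "z \<noteq> {}" by auto
    have "pmf (map_pmf (\<lambda>B. z - {B}) (pmf_of_set z)) S
        = card (z \<inter> ((\<lambda>B. z - {B}) -` {S})) / card z"
      using ne fz by (simp add: pmf_map measure_pmf_of_set)
    also have "card (z \<inter> ((\<lambda>B. z - {B}) -` {S})) = (if S \<subseteq> z \<and> card S = r then 1 else 0)"
    proof (cases "S \<subseteq> z \<and> card S = r")
      case True
      have "z \<inter> ((\<lambda>B. z - {B}) -` {S}) = z - S"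
      proof -
        have key: "z - {B} = S" if "B \<in> z" "B \<notin> S" for B
        proof -
          have "card (z - {B}) = r" using that cz fz by simp
          thus ?thesis using True that fz by (intro card_subset_eq[symmetric]) auto
        qed
        show ?thesis using True key by auto
      qed
      moreover have "card (z - S) = 1"
      proof -
        have "finite S" using True fz finite_subset by blast
        thus ?thesis using True cz by (simp add: card_Diff_subset)
      qed
      ultimately show ?thesis using True by simp
    next
      case False
      have "z \<inter> ((\<lambda>B. z - {B}) -` {S}) = {}"
      proof -
        have "False" if "B \<in> z" "z - {B} = S" for B
          using False that fz cz by auto
        thus ?thesis by blast
      qed
      thus ?thesis using False by simp
    qed
    finally show ?thesis using cz by simp
  qed
  have "pmf (bind_pmf (row_pmf n (r+1)) (\<lambda>z. map_pmf (\<lambda>B. z - {B}) (pmf_of_set z))) S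
      = (\<Sum>z\<in>KK n (r+1). pmf (map_pmf (\<lambda>B. z - {B}) (pmf_of_set z)) S) / real (n choose (r+1))"
    using assms by (simp add: pmf_bind expect_row)
  also have "(\<Sum>z\<in>KK n (r+1). pmf (map_pmf (\<lambda>B. z - {B}) (pmf_of_set z)) S)
      = (\<Sum>z\<in>KK n (r+1). (if S \<subseteq> z \<and> card S = r then 1 / real (r + 1) else 0))"
    by (rule sum.cong[OF refl]) (rule inner)
  also have "\<dots> = (if S \<in> KK n r then real (n - r) / real (r + 1) else 0)"
  proof (cases "S \<in> KK n r")
    case True
    have "(\<Sum>z\<in>KK n (r+1). (if S \<subseteq> z \<and> card S = r then 1 / real (r + 1) else 0))
        = (\<Sum>z\<in>KK n (r+1). if z \<in> {z. S \<subseteq> z} then 1 / real (r + 1) else 0)"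
      using True by simp
    also have "\<dots> = (\<Sum>z\<in>KK n (r+1) \<inter> {z. S \<subseteq> z}. 1 / real (r + 1))"
      by (rule sum.inter_restrict[OF KK_fin, symmetric])
    also have "KK n (r+1) \<inter> {z. S \<subseteq> z} = {z. z \<subseteq> {1..n} \<and> card z = r + 1 \<and> S \<subseteq> z}" by auto
    also have "card \<dots> = n - r"
      using True cnt[of "{1..n}" S "r+1"] by simp
    ultimately show ?thesis using True by simp
  next
    case False
    have "(\<Sum>z\<in>KK n (r+1). (if S \<subseteq> z \<and> card S = r then 1 / real (r + 1) else 0)) = 0"
      using False by (intro sum.neutral ballI if_not_P) auto
    thus ?thesis by (simp only: if_not_P[OF False])
  qed
  finally have eq: "pmf (bind_pmf (row_pmf n (r+1)) (\<lambda>z. map_pmf (\<lambda>B. z - {B}) (pmf_of_set z))) S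
      = (if S \<in> KK n r then real (n - r) / real (r + 1) else 0) / real (n choose (r+1))" .
  have p1: "real (n choose r) > 0" using assms by simp
  have p2: "real (n choose (r+1)) > 0" using assms by simp
  have id: "real (n - r) * real (n choose r) = real (r + 1) * real (n choose (r + 1))" using binom_id[OF assms] .
  have "(if S \<in> KK n r then real (n - r) / real (r + 1) else 0) / real (n choose (r+1))
      = indicator (KK n r) S / real (n choose r)"
  proof (cases "S \<in> KK n r")
    case True
    have "real (n - r) / real (r + 1) / real (n choose (r+1)) = real (n - r) / (real (r + 1) * real (n choose (r+1)))"
      by simp
    also have "\<dots> = real (n - r) / (real (n - r) * real (n choose r))" by (simp only: id)
    also have "\<dots> = 1 / real (n choose r)" using p1 assms by simp
    finally show ?thesis using True by simp
  next
    case False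
    have ind: "indicator (KK n r) S = (0::real)" using False by (rule indicator_simps(2))
    show ?thesis by (simp only: if_not_P[OF False] ind div_0)
  qed
  thus "pmf (bind_pmf (row_pmf n (r+1)) (\<lambda>z. map_pmf (\<lambda>B. z - {B}) (pmf_of_set z))) S
      = pmf (row_pmf n r) S"
    using eq assms by (simp add: pmf_row)
qed


definition mixp :: "nat \<Rightarrow> nat \<Rightarrow> nat set pmf" where
  "mixp n m = bind_pmf (bernoulli_pmf (1/2)) (\<lambda>b. row_pmf n (if b then m+1 else m))"

definition K1 :: "nat \<Rightarrow> nat set \<Rightarrow> nat set pmf" where
  "K1 n y = bind_pmf (pmf_of_set ({1..n} - y)) (\<lambda>B.
      map_pmf (\<lambda>C. (y - {B}) \<union> (if C then {B} else {})) (bernoulli_pmf (1/2)))"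

definition K2 :: "nat set \<Rightarrow> nat set pmf" where
  "K2 z = bind_pmf (pmf_of_set z) (\<lambda>B.
      map_pmf (\<lambda>C. (z - {B}) \<union> (if C then {B} else {})) (bernoulli_pmf (1/2)))"

lemma L1:
  assumes "m < n"
  shows "bind_pmf (row_pmf n m) (K1 n) = mixp n m"
proof -
  have step: "K1 n y = bind_pmf (bernoulli_pmf (1/2)) (\<lambda>C. if C then map_pmf (\<lambda>B. insert B y) (pmf_of_set ({1..n} - y)) else return_pmf y)"
    if y: "y \<in> set_pmf (row_pmf n m)" for y
  proof -
    have yK: "y \<in> KK n m" using y assms set_row[of m n] by simp
    have fy: "finite y" using yK finite_subset[of y "{1..n}"] by auto
    have "card ({1..n} - y) > 0" using yK assms fy by (simp add: card_Diff_subset)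
    hence ne: "{1..n} - y \<noteq> {}" by (metis card_gt_0_iff)
    have "K1 n y = bind_pmf (pmf_of_set ({1..n} - y)) (\<lambda>B. bind_pmf (bernoulli_pmf (1/2)) (\<lambda>C. return_pmf (if C then insert B y else y)))"
      unfolding K1_def map_pmf_def
      by (intro bind_pmf_cong refl) (use ne in auto)
    also have "\<dots> = bind_pmf (bernoulli_pmf (1/2)) (\<lambda>C. bind_pmf (pmf_of_set ({1..n} - y)) (\<lambda>B. return_pmf (if C then insert B y else y)))"
      by (rule bind_commute_pmf)
    also have "\<dots> = bind_pmf (bernoulli_pmf (1/2)) (\<lambda>C. if C then map_pmf (\<lambda>B. insert B y) (pmf_of_set ({1..n} - y)) else return_pmf y)"
      by (intro bind_pmf_cong refl) (auto simp: map_pmf_def)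
    finally show ?thesis .
  qed
  have "bind_pmf (row_pmf n m) (K1 n) = bind_pmf (row_pmf n m) (\<lambda>y. bind_pmf (bernoulli_pmf (1/2)) (\<lambda>C. if C then map_pmf (\<lambda>B. insert B y) (pmf_of_set ({1..n} - y)) else return_pmf y))"
    by (intro bind_pmf_cong refl step)
  also have "\<dots> = bind_pmf (bernoulli_pmf (1/2)) (\<lambda>C. bind_pmf (row_pmf n m) (\<lambda>y. if C then map_pmf (\<lambda>B. insert B y) (pmf_of_set ({1..n} - y)) else return_pmf y))"
    by (rule bind_commute_pmf)
  also have "\<dots> = mixp n m"
    unfolding mixp_def
  proof (intro bind_pmf_cong refl)
    fix C :: bool
    show "bind_pmf (row_pmf n m) (\<lambda>y. if C then map_pmf (\<lambda>B. insert B y) (pmf_of_set ({1..n} - y)) else return_pmf y)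
        = row_pmf n (if C then m + 1 else m)"
      using U1[OF assms] by (cases C) (simp_all add: bind_return_pmf')
  qed
  finally show ?thesis .
qed

lemma L2:
  assumes "m < n"
  shows "bind_pmf (row_pmf n (m+1)) K2 = mixp n m"
proof -
  have step: "K2 z = bind_pmf (bernoulli_pmf (1/2)) (\<lambda>C. if C then return_pmf z else map_pmf (\<lambda>B. z - {B}) (pmf_of_set z))"
    if z: "z \<in> set_pmf (row_pmf n (m+1))" for z
  proof -
    have zK: "z \<in> KK n (m+1)" using z assms set_row[of "m+1" n] by simp
    have fz: "finite z" using zK finite_subset[of z "{1..n}"] by auto
    have ne: "z \<noteq> {}" using zK by auto
    have "K2 z = bind_pmf (pmf_of_set z) (\<lambda>B. bind_pmf (bernoulli_pmf (1/2)) (\<lambda>C. return_pmf (if C then z else z - {B})))"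
      unfolding K2_def map_pmf_def
      by (intro bind_pmf_cong refl) (use ne fz in \<open>auto simp: insert_absorb\<close>)
    also have "\<dots> = bind_pmf (bernoulli_pmf (1/2)) (\<lambda>C. bind_pmf (pmf_of_set z) (\<lambda>B. return_pmf (if C then z else z - {B})))"
      by (rule bind_commute_pmf)
    also have "\<dots> = bind_pmf (bernoulli_pmf (1/2)) (\<lambda>C. if C then return_pmf z else map_pmf (\<lambda>B. z - {B}) (pmf_of_set z))"
      by (intro bind_pmf_cong refl) (auto simp: map_pmf_def)
    finally show ?thesis .
  qed
  have "bind_pmf (row_pmf n (m+1)) K2 = bind_pmf (row_pmf n (m+1)) (\<lambda>z. bind_pmf (bernoulli_pmf (1/2)) (\<lambda>C. if C then return_pmf z else map_pmf (\<lambda>B. z - {B}) (pmf_of_set z)))"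
    by (intro bind_pmf_cong refl step)
  also have "\<dots> = bind_pmf (bernoulli_pmf (1/2)) (\<lambda>C. bind_pmf (row_pmf n (m+1)) (\<lambda>z. if C then return_pmf z else map_pmf (\<lambda>B. z - {B}) (pmf_of_set z)))"
    by (rule bind_commute_pmf)
  also have "\<dots> = mixp n m"
    unfolding mixp_def
  proof (intro bind_pmf_cong refl)
    fix C :: bool
    show "bind_pmf (row_pmf n (m+1)) (\<lambda>z. if C then return_pmf z else map_pmf (\<lambda>B. z - {B}) (pmf_of_set z))
        = row_pmf n (if C then m + 1 else m)"
      using U2[OF assms] by (cases C) (simp_all add: bind_return_pmf')
  qed
  finally show ?thesis .
qed


lemma Pi_two:
  assumes "finite A" "a \<notin> A" "b \<notin> A" "a \<noteq> b"
  shows "Pi_pmf (insert a (insert b A)) d p =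
    bind_pmf (p a) (\<lambda>y. bind_pmf (p b) (\<lambda>z. map_pmf (\<lambda>g. g(a:=y, b:=z)) (Pi_pmf A d p)))"
proof -
  have "Pi_pmf (insert a (insert b A)) d p =
     bind_pmf (p a) (\<lambda>y. bind_pmf (Pi_pmf (insert b A) d p) (\<lambda>f. return_pmf (f(a := y))))"
    using assms by (intro Pi_pmf_insert') auto
  also have "Pi_pmf (insert b A) d p = bind_pmf (p b) (\<lambda>z. bind_pmf (Pi_pmf A d p) (\<lambda>g. return_pmf (g(b := z))))"
    using assms by (intro Pi_pmf_insert') auto
  moreover have eq: "\<And>g y z. g(b:=z, a:=y) = g(a:=y, b:=z)" using assms(4) by (simp add: fun_upd_twist)
  ultimately show ?thesis
    by (simp only: bind_assoc_pmf bind_return_pmf map_pmf_def eq)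
qed

lemma swap3: "bind_pmf A (\<lambda>a. bind_pmf B (\<lambda>b. bind_pmf C (\<lambda>c. f a b c))) =
   bind_pmf B (\<lambda>b. bind_pmf C (\<lambda>c. bind_pmf A (\<lambda>a. f a b c)))"
proof -
  have "bind_pmf A (\<lambda>a. bind_pmf B (\<lambda>b. bind_pmf C (\<lambda>c. f a b c))) =
     bind_pmf B (\<lambda>b. bind_pmf A (\<lambda>a. bind_pmf C (\<lambda>c. f a b c)))"
    by (rule bind_commute_pmf)
  also have "\<dots> = bind_pmf B (\<lambda>b. bind_pmf C (\<lambda>c. bind_pmf A (\<lambda>a. f a b c)))"
    by (intro bind_pmf_cong refl) (rule bind_commute_pmf)
  finally show ?thesis .
qed

definition Qp :: "nat \<Rightarrow> nat \<Rightarrow> nat \<Rightarrow> nat set pmf" where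
  "Qp n m r = (if r = m \<or> r = m+1 then mixp n m else row_pmf n r)"

lemma V_Pi:
  assumes "n = 2 * m + 1" and "m \<ge> 1"
  shows "V_pmf n m = Pi_pmf {1..n} {} (Qp n m)"
proof -
  define A where "A = {1..n} - {m, m+1}"
  have U: "{1..n} = insert m (insert (m+1) A)" using assms by (auto simp: A_def)
  have fA: "finite A" "m \<notin> A" "m+1 \<notin> A" "m \<noteq> m+1" by (auto simp: A_def)
  have mn: "m < n" using assms by simp
  define P where "P = Pi_pmf A {} (row_pmf n)"
  have PQ: "Pi_pmf A {} (Qp n m) = P"
    unfolding P_def by (intro Pi_pmf_cong) (auto simp: A_def Qp_def)
  define E1 where "E1 = (\<lambda>y Bm Cm. (y - {Bm}) \<union> (if Cm then {Bm::nat} else {}))"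
  have X: "X_pmf n = bind_pmf (row_pmf n m) (\<lambda>y. bind_pmf (row_pmf n (m+1)) (\<lambda>z. map_pmf (\<lambda>g. g(m:=y, m+1:=z)) P))"
    unfolding X_pmf_def U P_def by (rule Pi_two[OF fA])
  have "V_pmf n m = bind_pmf (row_pmf n m) (\<lambda>y. bind_pmf (row_pmf n (m+1)) (\<lambda>z. bind_pmf P (\<lambda>g.
     bind_pmf (pmf_of_set ({1..n} - y)) (\<lambda>Bm.
     bind_pmf (pmf_of_set z) (\<lambda>Bm1.
     bind_pmf (bernoulli_pmf (1/2)) (\<lambda>Cm.
     bind_pmf (bernoulli_pmf (1/2)) (\<lambda>Cm1.
     return_pmf (g(m := E1 y Bm Cm, m+1 := E1 z Bm1 Cm1)))))))))"
    unfolding V_pmf_def X E1_def by (simp add: bind_assoc_pmf bind_return_pmf map_pmf_def)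
  also have "\<dots> = bind_pmf (row_pmf n m) (\<lambda>y. bind_pmf (row_pmf n (m+1)) (\<lambda>z. bind_pmf P (\<lambda>g.
     bind_pmf (K1 n y) (\<lambda>Y. bind_pmf (K2 z) (\<lambda>Z. return_pmf (g(m := Y, m+1 := Z)))))))"
  proof (intro bind_pmf_cong refl)
    fix y z g
    show "bind_pmf (pmf_of_set ({1..n} - y)) (\<lambda>Bm.
     bind_pmf (pmf_of_set z) (\<lambda>Bm1.
     bind_pmf (bernoulli_pmf (1/2)) (\<lambda>Cm.
     bind_pmf (bernoulli_pmf (1/2)) (\<lambda>Cm1.
     return_pmf (g(m := E1 y Bm Cm, m+1 := E1 z Bm1 Cm1)))))) =
     bind_pmf (K1 n y) (\<lambda>Y. bind_pmf (K2 z) (\<lambda>Z. return_pmf (g(m := Y, m+1 := Z))))"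
    proof -
      have "bind_pmf (K1 n y) (\<lambda>Y. bind_pmf (K2 z) (\<lambda>Z. return_pmf (g(m := Y, m+1 := Z)))) =
        bind_pmf (pmf_of_set ({1..n} - y)) (\<lambda>Bm.
        bind_pmf (bernoulli_pmf (1/2)) (\<lambda>Cm.
        bind_pmf (pmf_of_set z) (\<lambda>Bm1.
        bind_pmf (bernoulli_pmf (1/2)) (\<lambda>Cm1.
        return_pmf (g(m := E1 y Bm Cm, m+1 := E1 z Bm1 Cm1))))))"
        unfolding K1_def K2_def E1_def by (simp add: bind_assoc_pmf bind_return_pmf map_pmf_def)
      also have "\<dots> = bind_pmf (pmf_of_set ({1..n} - y)) (\<lambda>Bm.
        bind_pmf (pmf_of_set z) (\<lambda>Bm1.
        bind_pmf (bernoulli_pmf (1/2)) (\<lambda>Cm.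
        bind_pmf (bernoulli_pmf (1/2)) (\<lambda>Cm1.
        return_pmf (g(m := E1 y Bm Cm, m+1 := E1 z Bm1 Cm1))))))"
        by (intro bind_pmf_cong refl) (rule bind_commute_pmf)
      finally show ?thesis by simp
    qed
  qed
  also have "\<dots> = bind_pmf (row_pmf n m) (\<lambda>y. bind_pmf (row_pmf n (m+1)) (\<lambda>z. 
     bind_pmf (K1 n y) (\<lambda>Y. bind_pmf (K2 z) (\<lambda>Z. bind_pmf P (\<lambda>g. return_pmf (g(m := Y, m+1 := Z)))))))"
    by (rule bind_pmf_cong[OF refl], rule bind_pmf_cong[OF refl], rule swap3)
  also have "\<dots> = bind_pmf (row_pmf n m) (\<lambda>y. bind_pmf (K1 n y) (\<lambda>Y. bind_pmf (row_pmf n (m+1)) (\<lambda>z. 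
     bind_pmf (K2 z) (\<lambda>Z. bind_pmf P (\<lambda>g. return_pmf (g(m := Y, m+1 := Z)))))))"
    by (rule bind_pmf_cong[OF refl], rule bind_commute_pmf)
  also have "\<dots> = bind_pmf (bind_pmf (row_pmf n m) (K1 n)) (\<lambda>Y. bind_pmf (bind_pmf (row_pmf n (m+1)) K2) (\<lambda>Z.
     map_pmf (\<lambda>g. g(m := Y, m+1 := Z)) P))"
    by (simp add: bind_assoc_pmf map_pmf_def)
  also have "\<dots> = bind_pmf (mixp n m) (\<lambda>Y. bind_pmf (mixp n m) (\<lambda>Z.
     map_pmf (\<lambda>g. g(m := Y, m+1 := Z)) P))"
    by (simp only: L1[OF mn] L2[OF mn])
  also have "\<dots> = Pi_pmf {1..n} {} (Qp n m)"
    unfolding U by (subst Pi_two[OF fA]) (simp add: PQ Qp_def)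
  finally show ?thesis .
qed

lemma cnt':
  assumes U: "finite U" and F: "F \<subseteq> U"
  shows "card {S. S \<subseteq> U \<and> card S = r \<and> F \<subseteq> S} = (if card F \<le> r then (card U - card F) choose (r - card F) else 0)"
proof (cases "card F \<le> r")
  case True thus ?thesis using cnt[OF U F True] by simp
next
  case False
  have "{S. S \<subseteq> U \<and> card S = r \<and> F \<subseteq> S} = {}"
  proof -
    have "False" if "S \<subseteq> U" "card S = r" "F \<subseteq> S" for S
    proof -
      have "finite S" using that U finite_subset by blast
      hence "card F \<le> card S" using that card_mono by blast
      thus False using False that by simp
    qed
    thus ?thesis by blast
  qed
  hence "card {S. S \<subseteq> U \<and> card S = r \<and> F \<subseteq> S} = 0" by (simp only: card.empty)
  thus ?thesis using False by simp
qed

lemma sum_ind: "finite K \<Longrightarrow> (\<Sum>S\<in>K. if P S then 1 else 0 :: real) = real (card {S\<in>K. P S})"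
proof -
  assume K: "finite K"
  have "(\<Sum>S\<in>K. if P S then 1 else 0 :: real) = (\<Sum>S\<in>{S\<in>K. P S}. 1)"
    by (rule sum.inter_filter[OF K, symmetric])
  thus ?thesis by simp
qed

lemma lin1: "finite K \<Longrightarrow> (\<Sum>S\<in>K. 1 - 2 * (if P S then 1 else 0 :: real)) = real (card K) - 2 * real (card {S\<in>K. P S})"
proof -
  assume K: "finite K"
  have "(\<Sum>S\<in>K. 1 - 2 * (if P S then 1 else 0 :: real)) = (\<Sum>S\<in>K. 1) - 2 * (\<Sum>S\<in>K. if P S then 1 else 0 :: real)"
    by (simp only: sum_subtractf sum_distrib_left)
  thus ?thesis using sum_ind[OF K, of P] by simp
qed

lemma lin2: "finite K \<Longrightarrow> (\<Sum>S\<in>K. 1 - 2 * (if P S then 1 else 0 :: real) - 2 * (if Q S then 1 else 0 :: real)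
   + 4 * (if P S \<and> Q S then 1 else 0 :: real)) = real (card K) - 2 * real (card {S\<in>K. P S})
   - 2 * real (card {S\<in>K. Q S}) + 4 * real (card {S\<in>K. P S \<and> Q S})"
proof -
  assume K: "finite K"
  have "(\<Sum>S\<in>K. 1 - 2 * (if P S then 1 else 0 :: real) - 2 * (if Q S then 1 else 0 :: real)
   + 4 * (if P S \<and> Q S then 1 else 0 :: real)) = (\<Sum>S\<in>K. 1) - 2 * (\<Sum>S\<in>K. if P S then 1 else 0 :: real)
   - 2 * (\<Sum>S\<in>K. if Q S then 1 else 0 :: real) + 4 * (\<Sum>S\<in>K. if P S \<and> Q S then 1 else 0 :: real)"
    by (simp only: sum_subtractf sum.distrib sum_distrib_left)
  thus ?thesis using sum_ind[OF K, of P] sum_ind[OF K, of Q] sum_ind[OF K, of "\<lambda>S. P S \<and> Q S"] by simp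
qed

lemma pr1:
  assumes "r \<le> n" "j \<in> {1..n}"
  shows "real (card {S\<in>KK n r. j \<in> S}) / real (n choose r) = real r / real n"
proof -
  have "{S\<in>KK n r. j \<in> S} = {S. S \<subseteq> {1..n} \<and> card S = r \<and> {j} \<subseteq> S}" by auto
  hence c: "card {S\<in>KK n r. j \<in> S} = (if 1 \<le> r then (n - 1) choose (r - 1) else 0)"
    using cnt'[of "{1..n}" "{j}" r] assms by simp
  show ?thesis
  proof (cases "r = 0")
    case False
    have "r * (n choose r) = n * ((n - 1) choose (r - 1))"
      using False by (intro times_binomial_minus1_eq) simp
    hence E: "real r * real (n choose r) = real n * real ((n - 1) choose (r - 1))"
      by (metis of_nat_mult)
    have p1: "real (n choose r) \<noteq> 0" using assms by simp
    have p2: "real n \<noteq> 0" using assms False by simp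
    have "real ((n - 1) choose (r - 1)) * real n = real r * real (n choose r)"
      using E by (simp only: mult.commute)
    hence "real ((n - 1) choose (r - 1)) / real (n choose r) = real r / real n"
      by (rule frac_eq_eq[OF p1 p2, THEN iffD2])
    thus ?thesis using c False by simp
  qed (use c in simp)
qed

lemma pr2:
  assumes "r \<le> n" "j \<in> {1..n}" "k \<in> {1..n}" "j \<noteq> k"
  shows "real (card {S\<in>KK n r. j \<in> S \<and> k \<in> S}) / real (n choose r)
     = real r * (real r - 1) / (real n * (real n - 1))"
proof -
  have "{S\<in>KK n r. j \<in> S \<and> k \<in> S} = {S. S \<subseteq> {1..n} \<and> card S = r \<and> {j,k} \<subseteq> S}" by auto
  hence c: "card {S\<in>KK n r. j \<in> S \<and> k \<in> S} = (if 2 \<le> r then (n - 2) choose (r - 2) else 0)"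
    using cnt'[of "{1..n}" "{j,k}" r] assms by (simp add: numeral_2_eq_2)
  show ?thesis
  proof (cases "2 \<le> r")
    case True
    have h1: "r * (n choose r) = n * ((n - 1) choose (r - 1))"
      using True by (intro times_binomial_minus1_eq) simp
    have h2': "(r - 1) * ((n - 1) choose (r - 1)) = (n - 1) * ((n - 1 - 1) choose (r - 1 - 1))"
      using True by (intro times_binomial_minus1_eq) simp
    have nn: "n - 1 - 1 = n - 2" "r - 1 - 1 = r - 2" by simp_all
    have h2: "(r - 1) * ((n - 1) choose (r - 1)) = (n - 1) * ((n - 2) choose (r - 2))"
      using h2' unfolding nn .
    have "r * (r - 1) * (n choose r) = (r - 1) * (r * (n choose r))" by (simp only: mult_ac)
    also have "\<dots> = n * ((r - 1) * ((n - 1) choose (r - 1)))" unfolding h1 by (simp only: mult_ac)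
    also have "\<dots> = n * ((n - 1) * ((n - 2) choose (r - 2)))" unfolding h2 ..
    finally have "r * (r - 1) * (n choose r) = n * (n - 1) * ((n - 2) choose (r - 2))" by (simp only: mult_ac)
    hence E: "real r * real (r - 1) * real (n choose r) = real n * real (n - 1) * real ((n - 2) choose (r - 2))"
      by (metis of_nat_mult)
    have p1: "real (n choose r) \<noteq> 0" using assms by simp
    have r1: "real (r - 1) = real r - 1" "real (n - 1) = real n - 1" using True assms by auto
    have p2: "real n * (real n - 1) \<noteq> 0" using assms True by simp
    have "real ((n - 2) choose (r - 2)) * (real n * (real n - 1)) = real r * (real r - 1) * real (n choose r)"
      using E unfolding r1 by (simp only: mult_ac)
    hence "real ((n - 2) choose (r - 2)) / real (n choose r) = real r * (real r - 1) / (real n * (real n - 1))"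
      by (rule frac_eq_eq[OF p1 p2, THEN iffD2])
    thus ?thesis using c True by simp
  next
    case False
    hence "r = 0 \<or> r = 1" by auto
    thus ?thesis using c False by auto
  qed
qed

lemma lam2: "lam n 2 s = 1 - 4 * real s / real n + 4 * (real s * (real s - 1)) / (real n * (real n - 1))"
  by (simp add: lam_def ffall_def numeral_2_eq_2 lessThan_Suc ac_simps)

definition fsg :: "nat \<Rightarrow> nat set \<Rightarrow> real" where
  "fsg j S = (if j \<in> S then -1 else 1)"

lemma E1row:
  assumes "r \<le> n" "j \<in> {1..n}"
  shows "measure_pmf.expectation (row_pmf n r) (fsg j) = 1 - 2 * real r / real n"
proof -
  have "(\<Sum>S\<in>KK n r. fsg j S) = (\<Sum>S\<in>KK n r. 1 - 2 * (if j \<in> S then 1 else 0))"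
    by (intro sum.cong) (auto simp: fsg_def)
  also have "\<dots> = real (card (KK n r)) - 2 * real (card {S\<in>KK n r. j \<in> S})"
    by (rule lin1[OF KK_fin])
  finally have "measure_pmf.expectation (row_pmf n r) (fsg j) =
     (real (n choose r) - 2 * real (card {S\<in>KK n r. j \<in> S})) / real (n choose r)"
    using assms by (simp add: expect_row KK_card KK_card[simplified])
  also have "\<dots> = 1 - 2 * (real (card {S\<in>KK n r. j \<in> S}) / real (n choose r))"
    using assms by (simp add: diff_divide_distrib)
  finally show ?thesis using pr1[OF assms] by simp
qed

lemma E2row:
  assumes "r \<le> n" "j \<in> {1..n}" "k \<in> {1..n}" "j \<noteq> k"
  shows "measure_pmf.expectation (row_pmf n r) (\<lambda>S. fsg j S * fsg k S) = lam n 2 r"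
proof -
  have "(\<Sum>S\<in>KK n r. fsg j S * fsg k S) = (\<Sum>S\<in>KK n r. 1 - 2 * (if j \<in> S then 1 else 0)
      - 2 * (if k \<in> S then 1 else 0) + 4 * (if j \<in> S \<and> k \<in> S then 1 else 0))"
    by (intro sum.cong) (auto simp: fsg_def)
  also have "\<dots> = real (card (KK n r)) - 2 * real (card {S\<in>KK n r. j \<in> S})
      - 2 * real (card {S\<in>KK n r. k \<in> S}) + 4 * real (card {S\<in>KK n r. j \<in> S \<and> k \<in> S})"
    by (rule lin2[OF KK_fin])
  finally have "measure_pmf.expectation (row_pmf n r) (\<lambda>S. fsg j S * fsg k S) =
     (real (n choose r) - 2 * real (card {S\<in>KK n r. j \<in> S})
      - 2 * real (card {S\<in>KK n r. k \<in> S}) + 4 * real (card {S\<in>KK n r. j \<in> S \<and> k \<in> S})) / real (n choose r)"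
    using assms by (simp add: expect_row KK_card KK_card[simplified])
  also have "\<dots> = 1 - 2 * (real (card {S\<in>KK n r. j \<in> S}) / real (n choose r))
      - 2 * (real (card {S\<in>KK n r. k \<in> S}) / real (n choose r))
      + 4 * (real (card {S\<in>KK n r. j \<in> S \<and> k \<in> S}) / real (n choose r))"
    using assms by (simp add: diff_divide_distrib add_divide_distrib)
  finally show ?thesis using pr1[OF assms(1,2)] pr1[OF assms(1,3)] pr2[OF assms] by (simp add: lam2)
qed


lemma setQ:
  assumes "n = 2*m+1" "m \<ge> 1" "r \<in> {1..n}"
  shows "set_pmf (Qp n m r) \<subseteq> Pow {1..n}"
proof -
  have rw: "set_pmf (row_pmf n s) \<subseteq> Pow {1..n}" if "s \<le> n" for s using set_row[OF that] by auto
  have "set_pmf (mixp n m) \<subseteq> set_pmf (row_pmf n (m+1)) \<union> set_pmf (row_pmf n m)"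
    unfolding mixp_def by (auto split: if_splits)
  moreover have "m \<le> n" "m + 1 \<le> n" using assms by auto
  ultimately have "set_pmf (mixp n m) \<subseteq> Pow {1..n}" using rw[of m] rw[of "m+1"] by blast
  thus ?thesis using assms rw[of r] by (auto simp: Qp_def)
qed

lemma finW:
  assumes "n = 2*m+1" "m \<ge> 1"
  shows "finite (set_pmf (Pi_pmf {1..n} {} (Qp n m)))"
proof -
  have "finite (set_pmf (Qp n m r))" if "r \<in> {1..n}" for r
    using setQ[OF assms that] by (rule finite_subset) simp
  hence "finite (PiE_dflt {1..n} {} (set_pmf \<circ> Qp n m))"
    by (intro finite_PiE_dflt) auto
  thus ?thesis by (simp add: set_Pi_pmf)
qed

lemma Emix:
  fixes g :: "nat set \<Rightarrow> real"
  assumes "m + 1 \<le> n"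
  shows "measure_pmf.expectation (mixp n m) g =
    (measure_pmf.expectation (row_pmf n m) g + measure_pmf.expectation (row_pmf n (m+1)) g) / 2"
proof -
  have "measure_pmf.expectation (mixp n m) g =
    (\<Sum>a\<in>UNIV. pmf (bernoulli_pmf (1/2)) a *\<^sub>R measure_pmf.expectation (row_pmf n (if a then m+1 else m)) g)"
    unfolding mixp_def
  proof (rule pmf_expectation_bind[where A=UNIV])
    show "finite (set_pmf (row_pmf n (if x then m + 1 else m)))" for x
      using assms set_row[of "if x then m + 1 else m" n] KK_fin by auto
  qed auto
  thus ?thesis by (simp add: UNIV_bool)
qed

lemma EW_prod:
  fixes g :: "nat \<Rightarrow> nat set \<Rightarrow> real"
  assumes "n = 2*m+1" "m \<ge> 1"
  shows "measure_pmf.expectation (Pi_pmf {1..n} {} (Qp n m)) (\<lambda>V. \<Prod>r\<in>{1..n}. g r (V r))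
     = (\<Prod>r\<in>{1..n}. measure_pmf.expectation (Qp n m r) (g r))"
proof -
  let ?W = "Pi_pmf {1..n} {} (Qp n m)"
  have int: "\<And>f::_\<Rightarrow>real. integrable (measure_pmf ?W) f"
    using integrable_measure_pmf_finite[OF finW[OF assms]] .
  have ind: "prob_space.indep_vars (measure_pmf ?W) (\<lambda>_. borel) (\<lambda>r V. g r (V r)) {1..n}"
    by (rule prob_space.indep_vars_compose2[OF prob_space_measure_pmf indep_vars_Pi_pmf]) auto
  have "measure_pmf.expectation ?W (\<lambda>V. \<Prod>r\<in>{1..n}. g r (V r))
      = (\<Prod>r\<in>{1..n}. measure_pmf.expectation ?W (\<lambda>V. g r (V r)))"
    by (rule prob_space.indep_vars_lebesgue_integral[OF prob_space_measure_pmf _ ind int]) simp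
  also have "\<dots> = (\<Prod>r\<in>{1..n}. measure_pmf.expectation (Qp n m r) (g r))"
  proof (rule prod.cong[OF refl])
    fix r assume r: "r \<in> {1..n}"
    have eq: "map_pmf (\<lambda>V. V r) ?W = Qp n m r" using r by (simp add: Pi_pmf_component)
    have "measure_pmf.expectation ?W (\<lambda>V. g r (V r)) = measure_pmf.expectation (map_pmf (\<lambda>V. V r) ?W) (g r)"
      by simp
    also have "\<dots> = measure_pmf.expectation (Qp n m r) (g r)" by (simp only: eq)
    finally show "measure_pmf.expectation ?W (\<lambda>V. g r (V r)) = measure_pmf.expectation (Qp n m r) (g r)" .
  qed
  finally show ?thesis .
qed

definition sgv :: "nat \<Rightarrow> nat \<Rightarrow> (nat \<Rightarrow> nat set) \<Rightarrow> real" where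
  "sgv n j V = (\<Prod>r\<in>{1..n}. fsg j (V r))"

lemma Vcol_sg: "real (Vcol n V j) = (1 - sgv n j V) / 2"
proof -
  define N where "N = (\<Sum>r=1..n. (if j \<in> V r then 1 else 0::nat))"
  have "sgv n j V = (\<Prod>r\<in>{1..n}. (-1::real) ^ (if j \<in> V r then 1 else 0))"
    unfolding sgv_def by (intro prod.cong) (auto simp: fsg_def)
  also have "\<dots> = (-1) ^ N" unfolding N_def by (rule power_sum[symmetric])
  finally have s: "sgv n j V = (-1) ^ N" .
  have v: "Vcol n V j = N mod 2" unfolding Vcol_def N_def ..
  show ?thesis
  proof (cases "even N")
    case True thus ?thesis using s v by simp
  next
    case False
    hence "N mod 2 = 1" by presburger
    thus ?thesis using s v False by simp
  qed
qed

lemma sgv_sq: "sgv n j V * sgv n j V = 1"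
proof -
  have "sgv n j V * sgv n j V = (\<Prod>r\<in>{1..n}. fsg j (V r) * fsg j (V r))"
    unfolding sgv_def by (rule prod.distrib[symmetric])
  also have "\<dots> = 1" by (intro prod.neutral) (auto simp: fsg_def)
  finally show ?thesis .
qed

lemma ES1:
  assumes "n = 2*m+1" "m \<ge> 1" "j \<in> {1..n}"
  shows "measure_pmf.expectation (Pi_pmf {1..n} {} (Qp n m)) (sgv n j) = 0"
proof -
  have "measure_pmf.expectation (Pi_pmf {1..n} {} (Qp n m)) (sgv n j)
      = (\<Prod>r\<in>{1..n}. measure_pmf.expectation (Qp n m r) (fsg j))"
    unfolding sgv_def by (rule EW_prod[OF assms(1,2)])
  also have "\<dots> = 0"
  proof (rule prod_zero)
    have "measure_pmf.expectation (Qp n m m) (fsg j) = 0"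
    proof -
      have "measure_pmf.expectation (Qp n m m) (fsg j) =
         ((1 - 2 * real m / real n) + (1 - 2 * real (m+1) / real n)) / 2"
        using assms by (simp add: Qp_def Emix E1row)
      also have "\<dots> = 0" using assms by (simp add: field_simps)
      finally show ?thesis .
    qed
    thus "\<exists>r\<in>{1..n}. measure_pmf.expectation (Qp n m r) (fsg j) = 0" using assms by force
  qed simp
  finally show ?thesis .
qed

lemma ES2:
  assumes "n = 2*m+1" "m \<ge> 1" "j \<in> {1..n}" "k \<in> {1..n}" "j \<noteq> k"
  shows "measure_pmf.expectation (Pi_pmf {1..n} {} (Qp n m)) (\<lambda>V. sgv n j V * sgv n k V) = lam_bar n m"
proof -
  define h where "h r = measure_pmf.expectation (Qp n m r) (\<lambda>S. fsg j S * fsg k S)" for r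
  have "measure_pmf.expectation (Pi_pmf {1..n} {} (Qp n m)) (\<lambda>V. sgv n j V * sgv n k V)
      = measure_pmf.expectation (Pi_pmf {1..n} {} (Qp n m)) (\<lambda>V. \<Prod>r\<in>{1..n}. fsg j (V r) * fsg k (V r))"
    unfolding sgv_def by (simp only: prod.distrib)
  also have "\<dots> = (\<Prod>r\<in>{1..n}. h r)"
    unfolding h_def by (rule EW_prod[OF assms(1,2)])
  also have "\<dots> = lam_bar n m"
  proof -
    define A where "A = {1..n} - {m, m+1}"
    have U: "{1..n} = insert m (insert (m+1) A)" using assms by (auto simp: A_def)
    have fA: "finite A" "m \<notin> A" "m+1 \<notin> A" by (auto simp: A_def)
    have hm: "h m = (lam n 2 m + lam n 2 (m+1)) / 2" "h (m+1) = (lam n 2 m + lam n 2 (m+1)) / 2"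
      using assms by (simp_all add: h_def Qp_def Emix E2row)
    have hA: "(\<Prod>r\<in>A. h r) = (\<Prod>r\<in>A. lam n 2 r)"
      by (intro prod.cong refl) (use assms in \<open>auto simp: h_def Qp_def A_def E2row\<close>)
    have "(\<Prod>r\<in>{1..n}. h r) = h m * (h (m+1) * (\<Prod>r\<in>A. h r))"
      unfolding U using fA by simp
    thus ?thesis unfolding hA hm lam_bar_def A_def[symmetric] by (simp add: power2_eq_square ac_simps)
  qed
  finally show ?thesis .
qed

theorem lemma3p4:
  fixes n m :: nat
  assumes "n = 2 * m + 1" and "m \<ge> 1"
  shows "prob_space.indep_vars (measure_pmf (V_pmf n m)) (\<lambda>_. count_space UNIV)
            (\<lambda>r V. V r) {1..n}
    \<and> (\<forall>r \<in> {m, m+1}. \<forall>S.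
            pmf (map_pmf (\<lambda>V. V r) (V_pmf n m)) S
              = 1/2 * pmf (row_pmf n m) S + 1/2 * pmf (row_pmf n (m+1)) S)
    \<and> (\<forall>j \<in> {1..n}. measure_pmf.prob (V_pmf n m) {V. Vcol n V j = 1} = 1/2)
    \<and> measure_pmf.expectation (V_pmf n m) (\<lambda>V. real (Vtot n V)) = real n / 2
    \<and> measure_pmf.variance (V_pmf n m) (\<lambda>V. real (Vtot n V))
            = real n / 4 * (1 - lam_bar n m) + (real n)^2 / 4 * lam_bar n m"
proof -
  let ?W = "Pi_pmf {1..n} {} (Qp n m)"
  have VW: "V_pmf n m = ?W" by (rule V_Pi[OF assms])
  have int: "\<And>f::_\<Rightarrow>real. integrable (measure_pmf ?W) f"
    using integrable_measure_pmf_finite[OF finW[OF assms]] .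
  have P1: "prob_space.indep_vars (measure_pmf (V_pmf n m)) (\<lambda>_. count_space UNIV) (\<lambda>r V. V r) {1..n}"
    unfolding VW by (rule indep_vars_Pi_pmf) simp
  have P2: "\<forall>r \<in> {m, m+1}. \<forall>S. pmf (map_pmf (\<lambda>V. V r) (V_pmf n m)) S
              = 1/2 * pmf (row_pmf n m) S + 1/2 * pmf (row_pmf n (m+1)) S"
  proof (intro ballI allI)
    fix r S assume r: "r \<in> {m, m+1}"
    have "map_pmf (\<lambda>V. V r) (V_pmf n m) = mixp n m"
      unfolding VW using r assms by (auto simp: Pi_pmf_component Qp_def)
    moreover have "pmf (mixp n m) S = 1/2 * pmf (row_pmf n m) S + 1/2 * pmf (row_pmf n (m+1)) S"
      unfolding mixp_def by (simp add: pmf_bind)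
    ultimately show "pmf (map_pmf (\<lambda>V. V r) (V_pmf n m)) S
              = 1/2 * pmf (row_pmf n m) S + 1/2 * pmf (row_pmf n (m+1)) S" by simp
  qed
  have EV: "measure_pmf.expectation ?W (\<lambda>V. real (Vcol n V j)) = 1/2" if j: "j \<in> {1..n}" for j
  proof -
    have "measure_pmf.expectation ?W (\<lambda>V. real (Vcol n V j)) = measure_pmf.expectation ?W (\<lambda>V. (1 - sgv n j V) / 2)"
      by (simp only: Vcol_sg)
    also have "\<dots> = (1 - measure_pmf.expectation ?W (sgv n j)) / 2"
      using int by simp
    finally show ?thesis using ES1[OF assms j] by simp
  qed
  have P3: "\<forall>j \<in> {1..n}. measure_pmf.prob (V_pmf n m) {V. Vcol n V j = 1} = 1/2"
  proof
    fix j assume j: "j \<in> {1..n}"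
    have "indicator {V. Vcol n V j = 1} V = real (Vcol n V j)" for V
    proof -
      have "Vcol n V j < 2" unfolding Vcol_def by simp
      thus ?thesis by (auto simp: indicator_def)
    qed
    hence "measure_pmf.expectation ?W (indicator {V. Vcol n V j = 1}) = measure_pmf.expectation ?W (\<lambda>V. real (Vcol n V j))"
      by presburger
    thus "measure_pmf.prob (V_pmf n m) {V. Vcol n V j = 1} = 1/2" using EV[OF j] unfolding VW by simp
  qed
  have EX: "measure_pmf.expectation ?W (\<lambda>V. real (Vtot n V)) = real n / 2"
  proof -
    have "measure_pmf.expectation ?W (\<lambda>V. real (Vtot n V)) = measure_pmf.expectation ?W (\<lambda>V. \<Sum>j=1..n. real (Vcol n V j))"
      unfolding Vtot_def by simp
    also have "\<dots> = (\<Sum>j=1..n. measure_pmf.expectation ?W (\<lambda>V. real (Vcol n V j)))"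
      by (rule Bochner_Integration.integral_sum) (rule int)
    also have "\<dots> = (\<Sum>j=1..n. 1/2)" by (intro sum.cong refl EV) 
    finally show ?thesis by simp
  qed
  have P5: "measure_pmf.variance ?W (\<lambda>V. real (Vtot n V))
            = real n / 4 * (1 - lam_bar n m) + (real n)^2 / 4 * lam_bar n m"
  proof -
    have sq: "(real (Vtot n V) - real n / 2)^2 = (\<Sum>j=1..n. \<Sum>k=1..n. sgv n j V * sgv n k V) / 4" for V
    proof -
      have "real (Vtot n V) = (\<Sum>j=1..n. (1 - sgv n j V) / 2)"
        unfolding Vtot_def by (simp add: Vcol_sg)
      also have "\<dots> = real n / 2 - (\<Sum>j=1..n. sgv n j V) / 2"
        by (simp add: sum_subtractf sum_divide_distrib[symmetric] diff_divide_distrib)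
      finally have "real (Vtot n V) - real n / 2 = - (\<Sum>j=1..n. sgv n j V) / 2" by simp
      hence "(real (Vtot n V) - real n / 2)^2 = (\<Sum>j=1..n. sgv n j V) * (\<Sum>j=1..n. sgv n j V) / 4"
        by (simp add: power2_eq_square)
      also have "(\<Sum>j=1..n. sgv n j V) * (\<Sum>j=1..n. sgv n j V) = (\<Sum>j=1..n. \<Sum>k=1..n. sgv n j V * sgv n k V)"
        by (rule sum_product)
      finally show ?thesis .
    qed
    have inner: "(\<Sum>k=1..n. measure_pmf.expectation ?W (\<lambda>V. sgv n j V * sgv n k V)) = 1 + (real n - 1) * lam_bar n m"
      if j: "j \<in> {1..n}" for j
    proof -
      have "(\<Sum>k=1..n. measure_pmf.expectation ?W (\<lambda>V. sgv n j V * sgv n k V))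
          = measure_pmf.expectation ?W (\<lambda>V. sgv n j V * sgv n j V)
            + (\<Sum>k\<in>{1..n} - {j}. measure_pmf.expectation ?W (\<lambda>V. sgv n j V * sgv n k V))"
        using j by (subst sum.remove[of _ j]) auto
      also have "measure_pmf.expectation ?W (\<lambda>V. sgv n j V * sgv n j V) = 1"
        by (simp add: sgv_sq)
      also have "(\<Sum>k\<in>{1..n} - {j}. measure_pmf.expectation ?W (\<lambda>V. sgv n j V * sgv n k V))
          = (\<Sum>k\<in>{1..n} - {j}. lam_bar n m)"
        by (intro sum.cong refl ES2[OF assms j]) auto
      also have "\<dots> = (real n - 1) * lam_bar n m" using j by simp
      finally show ?thesis .
    qed
    have "measure_pmf.variance ?W (\<lambda>V. real (Vtot n V))
        = measure_pmf.expectation ?W (\<lambda>V. (real (Vtot n V) - real n / 2)^2)"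
      by (simp only: EX)
    also have "\<dots> = measure_pmf.expectation ?W (\<lambda>V. (\<Sum>j=1..n. \<Sum>k=1..n. sgv n j V * sgv n k V) / 4)"
      by (simp only: sq)
    also have "\<dots> = measure_pmf.expectation ?W (\<lambda>V. \<Sum>j=1..n. \<Sum>k=1..n. sgv n j V * sgv n k V) / 4"
      by simp
    also have "\<dots> = (\<Sum>j=1..n. \<Sum>k=1..n. measure_pmf.expectation ?W (\<lambda>V. sgv n j V * sgv n k V)) / 4"
    proof -
      have "measure_pmf.expectation ?W (\<lambda>V. \<Sum>j=1..n. \<Sum>k=1..n. sgv n j V * sgv n k V)
          = (\<Sum>j=1..n. measure_pmf.expectation ?W (\<lambda>V. \<Sum>k=1..n. sgv n j V * sgv n k V))"
        by (rule Bochner_Integration.integral_sum) (rule int)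
      also have "\<dots> = (\<Sum>j=1..n. \<Sum>k=1..n. measure_pmf.expectation ?W (\<lambda>V. sgv n j V * sgv n k V))"
        by (intro sum.cong refl Bochner_Integration.integral_sum int)
      finally show ?thesis by simp
    qed
    also have "\<dots> = (\<Sum>j=1..n. 1 + (real n - 1) * lam_bar n m) / 4"
      by (simp only: sum.cong[OF refl inner])
    also have "\<dots> = real n / 4 * (1 - lam_bar n m) + (real n)^2 / 4 * lam_bar n m"
      by (simp add: power2_eq_square field_simps)
    finally show ?thesis .
  qed
  show ?thesis using P1 P2 P3 EX P5 unfolding VW by blast
qed

end
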